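(* Let $\mathcal{T}$ be a planar triangulation, $m\in\mathbb{Z}_{\ge 0}$, $r\in\mathbb{Z}_{\ge -1}$, and $\mathbf{r}$ a smoothness distribution with $\mathbf{r}(\tau)\in\{r,-1\}$ for every interior edge $\tau$, such that $\mathcal{Q}^{\mathbf r}$ is lower-acyclic. Let $\sigma$ be a face bounded by interior edges $\tau_1,\tau_2,\tau_3$, and let $\gamma_i=\tau_i\cap\tau_{i+1}$ (indices cyclic in $1,2,3$) be interior vertices of $\mathcal{T}$. Assume that for all $i\in\{1,2,3\}$: $\mathbf{r}(\tau_i)=r$, and $\mathbf{r}(\tau)\neq -1$ for every edge $\tau$ incident on $\gamma_i$. Let $\ell_i$ be an affine-linear form vanishing on $\tau_i$, and let $$\phi:\bigoplus_{i=1}^3{\mathcal{P}}_m/\langle\ell_i^{r+1}\rangle\longrightarrow\bigoplus_{i=1}^3{\mathcal{P}}_m/\mathfrak{J}^{\mathbf r}_{\gamma_i},\qquad (a_1,a_2,a_3)\mapsto(-a_1+a_2,\,-a_2+a_3,\,a_1-a_3).$$ If the cokernel of $\phi$ is trivial, then $\mathcal{Q}^{\mathbf s}$ is lower-acyclic, where $\mathbf{s}(\tau)=\mathbf{r}(\tau)$ for interior edges $\tau\notin\{\tau_1,\tau_2,\tau_3\}$ and $\mathbf{s}(\tau_i)=-1$ for $i=1,2,3$.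
   Context: $\mathcal{T}$ is a finite planar mesh: a subdivision of a closed polygonal region $\Omega\subset\mathbb{R}^2$ (possibly not simply connected) into closed polygonal faces (here triangles) meeting along straight edges and vertices. An edge or vertex is interior if it is not contained in $\partial\Omega$; $\mathcal{T}^\circ_1,\mathcal{T}^\circ_0$ denote interior edges and interior vertices, $\mathcal{T}_2$ the faces. ${\mathcal{P}}_m$ is the space of real bivariate polynomials of total degree at most $m$; for polynomials $f_1,\dots,f_k$, $\langle f_1,\dots,f_k\rangle$ denotes the subspace of ${\mathcal{P}}_m$ of all polynomial combinations $\sum g_if_i$ lying in ${\mathcal{P}}_m$. A smoothness distribution is a map $\mathbf{r}:\mathcal{T}^\circ_1\to\mathbb{Z}_{\ge -1}$. For $\tau\in\mathcal{T}^\circ_1$ let $\ell_\tau$ be a nonzero affine-linear polynomial vanishing on $\tau$ and $\mathfrak{J}^{\mathbf r}_\tau=\langle \ell_\tau^{\mathbf r(\tau)+1}\rangle$ (equal to ${\mathcal{P}}_m$ if $\mathbf r(\tau)=-1$); for $\gamma\in\mathcal{T}^\circ_0$, $\mathfrak{J}^{\mathbf r}_\gamma=\sum_{\tau\ni\gamma}\mathfrak{J}^{\mathbf r}_\tau$ over interior edges containing $\gamma$. $\mathcal{C}$ is the chain complex $\bigoplus_{\sigma\in\mathcal{T}_2}{\mathcal{P}}_m\to\bigoplus_{\tau\in\mathcal{T}^\circ_1}{\mathcal{P}}_m\to\bigoplus_{\gamma\in\mathcal{T}^\circ_0}{\mathcal{P}}_m$ (degrees $2,1,0$) with the cellular boundary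 maps of $\mathcal{T}$ relative to $\partial\Omega$ (signs $\pm1$ from fixed orientations). $\mathcal{I}^{\mathbf r}$ is the subcomplex $0\to\bigoplus_{\tau}\mathfrak{J}^{\mathbf r}_\tau\to\bigoplus_{\gamma}\mathfrak{J}^{\mathbf r}_\gamma$ and $\mathcal{Q}^{\mathbf r}=\mathcal{C}/\mathcal{I}^{\mathbf r}$; $H_2(\mathcal{Q}^{\mathbf r})$ is the space of piecewise polynomials in ${\mathcal{P}}_m$ that are $C^{\mathbf r(\tau)}$ across each interior edge $\tau$. $\mathcal{Q}^{\mathbf r}$ is lower-acyclic if $H_1(\mathcal{Q}^{\mathbf r})=H_0(\mathcal{Q}^{\mathbf r})=0$. *)

theory Defs
  imports "HOL-Analysis.Analysis"
begin

text \<open>Vertices have type 'v (with a linear order, used only to fix orientations);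
  p gives vertex coordinates in the plane; T is the set of faces (3-element vertex sets).\<close>

definition face_hull :: "('v \<Rightarrow> real \<times> real) \<Rightarrow> 'v set \<Rightarrow> (real \<times> real) set" where
  "face_hull p s = convex hull (p ` s)"

definition planar_triangulation :: "('v \<Rightarrow> real \<times> real) \<Rightarrow> 'v set set \<Rightarrow> bool" where
  "planar_triangulation p T \<longleftrightarrow>
     finite T \<and> T \<noteq> {} \<and>
     (\<forall>\<sigma>\<in>T. finite \<sigma> \<and> card \<sigma> = 3 \<and> \<not> collinear (p ` \<sigma>)) \<and>
     inj_on p (\<Union>T) \<and>
     (\<forall>\<sigma>\<in>T. \<forall>\<sigma>'\<in>T. face_hull p \<sigma> \<inter> face_hull p \<sigma>' = face_hull p (\<sigma> \<inter> \<sigma>'))"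

definition region :: "('v \<Rightarrow> real \<times> real) \<Rightarrow> 'v set set \<Rightarrow> (real \<times> real) set" where
  "region p T = (\<Union>\<sigma>\<in>T. face_hull p \<sigma>)"

definition edges :: "'v set set \<Rightarrow> 'v set set" where
  "edges T = {\<tau>. card \<tau> = 2 \<and> (\<exists>\<sigma>\<in>T. \<tau> \<subseteq> \<sigma>)}"

definition int_edges :: "('v \<Rightarrow> real \<times> real) \<Rightarrow> 'v set set \<Rightarrow> 'v set set" where
  "int_edges p T = {\<tau>\<in>edges T. \<not> (face_hull p \<tau> \<subseteq> frontier (region p T))}"

definition int_verts :: "('v \<Rightarrow> real \<times> real) \<Rightarrow> 'v set set \<Rightarrow> 'v set" where
  "int_verts p T = {v\<in>\<Union>T. p v \<notin> frontier (region p T)}"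

definition poly_le :: "nat \<Rightarrow> (real \<times> real \<Rightarrow> real) \<Rightarrow> bool" where
  "poly_le m f \<longleftrightarrow> (\<exists>c :: nat \<Rightarrow> nat \<Rightarrow> real.
      \<forall>z. f z = (\<Sum>i\<le>m. \<Sum>j\<le>m - i. c i j * fst z ^ i * snd z ^ j))"

definition is_poly :: "(real \<times> real \<Rightarrow> real) \<Rightarrow> bool" where
  "is_poly f \<longleftrightarrow> (\<exists>n. poly_le n f)"

text \<open>Canonical nonzero affine-linear form vanishing on the line through the edge
  (any other choice differs by a nonzero scalar and gives the same spaces below).\<close>
definition edge_form :: "('v::linorder \<Rightarrow> real \<times> real) \<Rightarrow> 'v set \<Rightarrow> real \<times> real \<Rightarrow> real" where
  "edge_form p \<tau> z =
     (let a = p (Min \<tau>); b = p (Max \<tau>) in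
      (fst b - fst a) * (snd z - snd a) - (snd b - snd a) * (fst z - fst a))"

definition gen1 :: "nat \<Rightarrow> (real \<times> real \<Rightarrow> real) \<Rightarrow> (real \<times> real \<Rightarrow> real) set" where
  "gen1 m f = {h. poly_le m h \<and> (\<exists>g. is_poly g \<and> (\<forall>z. h z = g z * f z))}"

definition J_edge :: "nat \<Rightarrow> ('v::linorder \<Rightarrow> real \<times> real) \<Rightarrow> ('v set \<Rightarrow> int) \<Rightarrow> 'v set
    \<Rightarrow> (real \<times> real \<Rightarrow> real) set" where
  "J_edge m p r \<tau> = gen1 m (\<lambda>z. edge_form p \<tau> z ^ nat (r \<tau> + 1))"

definition edges_at :: "('v \<Rightarrow> real \<times> real) \<Rightarrow> 'v set set \<Rightarrow> 'v \<Rightarrow> 'v set set" where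
  "edges_at p T \<gamma> = {\<tau>\<in>int_edges p T. \<gamma> \<in> \<tau>}"

definition J_vert :: "nat \<Rightarrow> ('v::linorder \<Rightarrow> real \<times> real) \<Rightarrow> 'v set set \<Rightarrow> ('v set \<Rightarrow> int)
    \<Rightarrow> 'v \<Rightarrow> (real \<times> real \<Rightarrow> real) set" where
  "J_vert m p T r \<gamma> = {h. \<exists>H. (\<forall>\<tau>\<in>edges_at p T \<gamma>. H \<tau> \<in> J_edge m p r \<tau>) \<and>
                              (\<forall>z. h z = (\<Sum>\<tau>\<in>edges_at p T \<gamma>. H \<tau> z))}"

text \<open>Orientations are fixed via the linear order on vertices (simplicial convention).\<close>
definition edge_sign :: "'v::linorder set \<Rightarrow> 'v \<Rightarrow> real" where
  "edge_sign \<tau> \<gamma> = (if \<gamma> = Max \<tau> then 1 else -1)"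

definition face_sign :: "'v::linorder set \<Rightarrow> 'v set \<Rightarrow> real" where
  "face_sign \<sigma> \<tau> = (-1) ^ card {x\<in>\<sigma>. x < Min (\<sigma> - \<tau>)}"

definition bd2 :: "'v::linorder set set \<Rightarrow> ('v set \<Rightarrow> real \<times> real \<Rightarrow> real)
    \<Rightarrow> 'v set \<Rightarrow> real \<times> real \<Rightarrow> real" where
  "bd2 T C \<tau> = (\<lambda>z. \<Sum>\<sigma>\<in>{\<sigma>\<in>T. \<tau> \<subseteq> \<sigma>}. face_sign \<sigma> \<tau> * C \<sigma> z)"

definition bd1 :: "('v::linorder \<Rightarrow> real \<times> real) \<Rightarrow> 'v set set \<Rightarrow> ('v set \<Rightarrow> real \<times> real \<Rightarrow> real)
    \<Rightarrow> 'v \<Rightarrow> real \<times> real \<Rightarrow> real" where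
  "bd1 p T A \<gamma> = (\<lambda>z. \<Sum>\<tau>\<in>edges_at p T \<gamma>. edge_sign \<tau> \<gamma> * A \<tau> z)"

text \<open>Lower-acyclicity of \<open>Q^r = C / I^r\<close>: \<open>H_0(Q^r) = 0\<close> and \<open>H_1(Q^r) = 0\<close>, written out
  on representatives.\<close>
definition lower_acyclic :: "nat \<Rightarrow> ('v::linorder \<Rightarrow> real \<times> real) \<Rightarrow> 'v set set
    \<Rightarrow> ('v set \<Rightarrow> int) \<Rightarrow> bool" where
  "lower_acyclic m p T r \<longleftrightarrow>
     (\<forall>G. (\<forall>\<gamma>\<in>int_verts p T. poly_le m (G \<gamma>)) \<longrightarrow>
        (\<exists>A. (\<forall>\<tau>\<in>int_edges p T. poly_le m (A \<tau>)) \<and>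
             (\<forall>\<gamma>\<in>int_verts p T. (\<lambda>z. bd1 p T A \<gamma> z - G \<gamma> z) \<in> J_vert m p T r \<gamma>))) \<and>
     (\<forall>A. (\<forall>\<tau>\<in>int_edges p T. poly_le m (A \<tau>)) \<and>
          (\<forall>\<gamma>\<in>int_verts p T. bd1 p T A \<gamma> \<in> J_vert m p T r \<gamma>) \<longrightarrow>
        (\<exists>C. (\<forall>\<sigma>\<in>T. poly_le m (C \<sigma>)) \<and>
             (\<forall>\<tau>\<in>int_edges p T. (\<lambda>z. bd2 T C \<tau> z - A \<tau> z) \<in> J_edge m p r \<tau>)))"

definition smoothness_distribution :: "('v \<Rightarrow> real \<times> real) \<Rightarrow> 'v set set \<Rightarrow> ('v set \<Rightarrow> int) \<Rightarrow> bool" where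
  "smoothness_distribution p T r \<longleftrightarrow> (\<forall>\<tau>\<in>int_edges p T. r \<tau> \<ge> -1)"

end

theory Submission imports Defs begin

lemma poly_le_lin:
  assumes "poly_le m f" "poly_le m g"
  shows "poly_le m (\<lambda>z. a * f z + b * g z)"
proof -
  obtain c where c: "\<forall>z. f z = (\<Sum>i\<le>m. \<Sum>j\<le>m - i. c i j * fst z ^ i * snd z ^ j)"
    using assms(1) unfolding poly_le_def by blast
  obtain d where d: "\<forall>z. g z = (\<Sum>i\<le>m. \<Sum>j\<le>m - i. d i j * fst z ^ i * snd z ^ j)"
    using assms(2) unfolding poly_le_def by blast
  show ?thesis unfolding poly_le_def
    apply (rule exI[of _ "\<lambda>i j. a * c i j + b * d i j"])
    using c d by (simp add: sum_distrib_left sum.distrib algebra_simps)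
qed

lemma poly_le_zero: "poly_le m (\<lambda>z. 0)"
  unfolding poly_le_def by (rule exI[of _ "\<lambda>i j. 0"]) simp

lemma poly_le_add: "poly_le m f \<Longrightarrow> poly_le m g \<Longrightarrow> poly_le m (\<lambda>z. f z + g z)"
  using poly_le_lin[of m f g 1 1] by simp
lemma poly_le_diff: "poly_le m f \<Longrightarrow> poly_le m g \<Longrightarrow> poly_le m (\<lambda>z. f z - g z)"
  using poly_le_lin[of m f g 1 "-1"] by simp
lemma poly_le_scale: "poly_le m f \<Longrightarrow> poly_le m (\<lambda>z. a * f z)"
  using poly_le_lin[of m f f a 0] by simp

lemma poly_le_sum_fin: "finite S \<Longrightarrow> (\<forall>i\<in>S. poly_le m (f i)) \<longrightarrow> poly_le m (\<lambda>z. \<Sum>i\<in>S. f i z)"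
proof (induction S rule: finite_induct)
  case empty then show ?case by (simp add: poly_le_zero)
next
  case (insert x F)
  then show ?case using poly_le_add[of m "f x" "\<lambda>z. \<Sum>i\<in>F. f i z"] by simp
qed

lemma poly_le_sum: "(\<And>i. i \<in> S \<Longrightarrow> poly_le m (f i)) \<Longrightarrow> poly_le m (\<lambda>z. \<Sum>i\<in>S. f i z)"
  using poly_le_sum_fin[of S m f] by (cases "finite S") (auto simp: poly_le_zero)

lemma edge_sign_sq: "edge_sign \<tau> \<gamma> * edge_sign \<tau> \<gamma> = 1"
  by (simp add: edge_sign_def)

lemma gen1_one: "gen1 m (\<lambda>z. 1) = {h. poly_le m h}"
  unfolding gen1_def is_poly_def by auto

lemma J_vert_mono:
  assumes "\<forall>\<tau>\<in>edges_at p T \<gamma>. J_edge m p r \<tau> \<subseteq> J_edge m p s \<tau>"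
  shows "J_vert m p T r \<gamma> \<subseteq> J_vert m p T s \<gamma>"
  using assms unfolding J_vert_def by blast

lemma J_vert_cong:
  assumes "\<forall>\<tau>\<in>edges_at p T \<gamma>. r \<tau> = s \<tau>"
  shows "J_vert m p T r \<gamma> = J_vert m p T s \<gamma>"
  using assms unfolding J_vert_def J_edge_def by (intro Collect_cong ex_cong) auto

lemma poly_bd1: "(\<forall>\<tau>\<in>int_edges p T. poly_le m (A \<tau>)) \<Longrightarrow> poly_le m (bd1 p T A \<gamma>)"
  unfolding bd1_def by (rule poly_le_sum) (auto simp: edges_at_def intro: poly_le_scale)

lemma poly_bd2: "(\<forall>\<sigma>\<in>T. poly_le m (C \<sigma>)) \<Longrightarrow> poly_le m (bd2 T C \<tau>)"
  unfolding bd2_def by (rule poly_le_sum) (auto intro: poly_le_scale)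

lemma edge_sign_opp: "x \<noteq> y \<Longrightarrow> edge_sign {x, y} x * edge_sign {x, y} y = -1"
  unfolding edge_sign_def by (cases "x < y") (auto simp: max_def)

lemma comb0:
  assumes "card a = 2" "card b = 2" "card c = 2" "card \<sigma> = 3" "a \<subseteq> \<sigma>" "b \<subseteq> \<sigma>" "c \<subseteq> \<sigma>"
    "a \<inter> b = {g}" "c \<inter> a = {x}" "c \<inter> b = {y}"
  shows "c = {x, y} \<and> x \<noteq> y"
proof -
  have fa: "finite a" "finite b" using assms(1,2) card.infinite by fastforce+
  have "card a + card b = card (a \<union> b) + card (a \<inter> b)" using card_Un_Int fa by blast
  then have "card (a \<union> b) = 3" using assms by simp
  moreover have "finite \<sigma>" using assms(4) card.infinite by fastforce
  ultimately have "a \<union> b = \<sigma>" using assms(4,5,6) by (intro card_subset_eq) auto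
  then have "c = (c \<inter> a) \<union> (c \<inter> b)" using assms(7) by blast
  then have c: "c = {x, y}" using assms(9,10) by (simp add: insert_commute)
  moreover have "x \<noteq> y" using assms(3) c by auto
  ultimately show ?thesis by simp
qed

lemma comb:
  assumes "card \<tau>1 = 2" "card \<tau>2 = 2" "card \<tau>3 = 2" "card \<sigma> = 3"
    "\<tau>1 \<subseteq> \<sigma>" "\<tau>2 \<subseteq> \<sigma>" "\<tau>3 \<subseteq> \<sigma>"
    "\<tau>1 \<inter> \<tau>2 = {\<gamma>1}" "\<tau>2 \<inter> \<tau>3 = {\<gamma>2}" "\<tau>3 \<inter> \<tau>1 = {\<gamma>3}"
  shows "\<gamma>1 \<noteq> \<gamma>2 \<and> \<gamma>2 \<noteq> \<gamma>3 \<and> \<gamma>1 \<noteq> \<gamma>3 \<and> \<tau>1 = {\<gamma>1, \<gamma>3} \<and> \<tau>2 = {\<gamma>1, \<gamma>2} \<and> \<tau>3 = {\<gamma>2, \<gamma>3}"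
proof -
  have i: "\<tau>2 \<inter> \<tau>1 = {\<gamma>1}" "\<tau>3 \<inter> \<tau>2 = {\<gamma>2}" "\<tau>1 \<inter> \<tau>3 = {\<gamma>3}"
    using assms(8-10) by (simp_all add: Int_commute)
  have "\<tau>3 = {\<gamma>3, \<gamma>2} \<and> \<gamma>3 \<noteq> \<gamma>2"
    by (rule comb0[of \<tau>1 \<tau>2 \<tau>3 \<sigma> \<gamma>1]) (use assms i in simp_all)
  moreover have "\<tau>1 = {\<gamma>1, \<gamma>3} \<and> \<gamma>1 \<noteq> \<gamma>3"
    by (rule comb0[of \<tau>2 \<tau>3 \<tau>1 \<sigma> \<gamma>2]) (use assms i in simp_all)
  moreover have "\<tau>2 = {\<gamma>2, \<gamma>1} \<and> \<gamma>2 \<noteq> \<gamma>1"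
    by (rule comb0[of \<tau>3 \<tau>1 \<tau>2 \<sigma> \<gamma>3]) (use assms i in simp_all)
  ultimately show ?thesis by auto
qed

theorem mainTheorem2:
  fixes p :: "'v::linorder \<Rightarrow> real \<times> real" and T :: "'v set set"
    and m :: nat and rr :: int and r :: "'v set \<Rightarrow> int"
    and \<sigma> \<tau>1 \<tau>2 \<tau>3 :: "'v set" and \<gamma>1 \<gamma>2 \<gamma>3 :: 'v
  assumes tri: "planar_triangulation p T"
    and rr: "rr \<ge> -1"
    and sd: "smoothness_distribution p T r"
    and rvals: "\<forall>\<tau>\<in>int_edges p T. r \<tau> \<in> {rr, -1}"
    and acyc: "lower_acyclic m p T r"
    and face: "\<sigma> \<in> T"
    and edges_sub: "\<tau>1 \<subseteq> \<sigma>" "\<tau>2 \<subseteq> \<sigma>" "\<tau>3 \<subseteq> \<sigma>"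
    and edges_int: "\<tau>1 \<in> int_edges p T" "\<tau>2 \<in> int_edges p T" "\<tau>3 \<in> int_edges p T"
    and distinct: "\<tau>1 \<noteq> \<tau>2" "\<tau>2 \<noteq> \<tau>3" "\<tau>1 \<noteq> \<tau>3"
    and gam: "\<tau>1 \<inter> \<tau>2 = {\<gamma>1}" "\<tau>2 \<inter> \<tau>3 = {\<gamma>2}" "\<tau>3 \<inter> \<tau>1 = {\<gamma>3}"
    and gam_int: "\<gamma>1 \<in> int_verts p T" "\<gamma>2 \<in> int_verts p T" "\<gamma>3 \<in> int_verts p T"
    and r_tau: "r \<tau>1 = rr" "r \<tau>2 = rr" "r \<tau>3 = rr"
    and r_inc: "\<forall>\<gamma>\<in>{\<gamma>1, \<gamma>2, \<gamma>3}. \<forall>\<tau>\<in>edges_at p T \<gamma>. r \<tau> \<noteq> -1"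
    and coker: "\<forall>b1 b2 b3. poly_le m b1 \<and> poly_le m b2 \<and> poly_le m b3 \<longrightarrow>
        (\<exists>a1 a2 a3. poly_le m a1 \<and> poly_le m a2 \<and> poly_le m a3 \<and>
           (\<lambda>z. - a1 z + a2 z - b1 z) \<in> J_vert m p T r \<gamma>1 \<and>
           (\<lambda>z. - a2 z + a3 z - b2 z) \<in> J_vert m p T r \<gamma>2 \<and>
           (\<lambda>z. a1 z - a3 z - b3 z) \<in> J_vert m p T r \<gamma>3)"
  shows "lower_acyclic m p T (\<lambda>\<tau>. if \<tau> \<in> {\<tau>1, \<tau>2, \<tau>3} then -1 else r \<tau>)"
proof -
  define s where "s = (\<lambda>\<tau>. if \<tau> \<in> {\<tau>1, \<tau>2, \<tau>3} then -1 else (r \<tau>::int))"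
  have fT: "finite T" and T3: "\<forall>\<sigma>\<in>T. finite \<sigma> \<and> card \<sigma> = 3"
    using tri unfolding planar_triangulation_def by (blast, blast)
  have "edges T \<subseteq> Pow (\<Union>T)" unfolding edges_def by auto
  moreover have "finite (\<Union>T)" using fT T3 by auto
  ultimately have "finite (edges T)" by (meson finite_Pow_iff finite_subset)
  then have fin: "finite (int_edges p T)" unfolding int_edges_def by simp
  have fin_at: "\<And>\<gamma>. finite (edges_at p T \<gamma>)"
    using fin unfolding edges_at_def by simp
  have c2: "card \<tau>1 = 2" "card \<tau>2 = 2" "card \<tau>3 = 2"
    using edges_int unfolding int_edges_def edges_def by simp_all
  have cs: "card \<sigma> = 3" using T3 face by auto
  have cb: "\<gamma>1 \<noteq> \<gamma>2 \<and> \<gamma>2 \<noteq> \<gamma>3 \<and> \<gamma>1 \<noteq> \<gamma>3 \<and> \<tau>1 = {\<gamma>1, \<gamma>3} \<and> \<tau>2 = {\<gamma>1, \<gamma>2} \<and> \<tau>3 = {\<gamma>2, \<gamma>3}"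
    by (rule comb[OF c2 cs edges_sub gam])
  then have d12: "\<gamma>1 \<noteq> \<gamma>2" and d23: "\<gamma>2 \<noteq> \<gamma>3" and d13: "\<gamma>1 \<noteq> \<gamma>3"
    and t1: "\<tau>1 = {\<gamma>1, \<gamma>3}" and t2: "\<tau>2 = {\<gamma>1, \<gamma>2}" and t3: "\<tau>3 = {\<gamma>2, \<gamma>3}" by auto
  have s_other: "\<And>\<tau>. \<tau> \<notin> {\<tau>1, \<tau>2, \<tau>3} \<Longrightarrow> s \<tau> = r \<tau>" unfolding s_def by auto
  have Js_all: "\<And>\<tau>. \<tau> \<in> {\<tau>1, \<tau>2, \<tau>3} \<Longrightarrow> J_edge m p s \<tau> = {h. poly_le m h}"
    unfolding J_edge_def s_def by (simp add: gen1_one)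
  have Jr_poly: "\<And>\<tau>. J_edge m p r \<tau> \<subseteq> {h. poly_le m h}"
    unfolding J_edge_def gen1_def by auto
  have Jsub: "\<And>\<tau>. J_edge m p r \<tau> \<subseteq> J_edge m p s \<tau>"
  proof -
    fix \<tau>
    show "J_edge m p r \<tau> \<subseteq> J_edge m p s \<tau>"
    proof (cases "\<tau> \<in> {\<tau>1, \<tau>2, \<tau>3}")
      case True then show ?thesis using Js_all[OF True] Jr_poly[of \<tau>] by simp
    next
      case False then show ?thesis unfolding J_edge_def using s_other by simp
    qed
  qed
  have Jvsub: "\<And>\<gamma>. J_vert m p T r \<gamma> \<subseteq> J_vert m p T s \<gamma>"
    by (rule J_vert_mono) (use Jsub in blast)
  have notin: "\<And>\<gamma> \<tau>. \<gamma> \<notin> {\<gamma>1, \<gamma>2, \<gamma>3} \<Longrightarrow> \<tau> \<in> edges_at p T \<gamma> \<Longrightarrow> \<tau> \<notin> {\<tau>1, \<tau>2, \<tau>3}"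
    unfolding edges_at_def using t1 t2 t3 by auto
  note acyc1 = acyc[unfolded lower_acyclic_def, THEN conjunct1, rule_format]
  note acyc2 = acyc[unfolded lower_acyclic_def, THEN conjunct2]
  have part1: "\<forall>G. (\<forall>\<gamma>\<in>int_verts p T. poly_le m (G \<gamma>)) \<longrightarrow>
        (\<exists>A. (\<forall>\<tau>\<in>int_edges p T. poly_le m (A \<tau>)) \<and>
             (\<forall>\<gamma>\<in>int_verts p T. (\<lambda>z. bd1 p T A \<gamma> z - G \<gamma> z) \<in> J_vert m p T s \<gamma>))"
  proof (intro allI impI)
    fix G assume "\<forall>\<gamma>\<in>int_verts p T. poly_le m (G \<gamma>)"
    then obtain A where "(\<forall>\<tau>\<in>int_edges p T. poly_le m (A \<tau>))"
      "(\<forall>\<gamma>\<in>int_verts p T. (\<lambda>z. bd1 p T A \<gamma> z - G \<gamma> z) \<in> J_vert m p T r \<gamma>)"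
      using acyc1 by blast
    then show "\<exists>A. (\<forall>\<tau>\<in>int_edges p T. poly_le m (A \<tau>)) \<and>
             (\<forall>\<gamma>\<in>int_verts p T. (\<lambda>z. bd1 p T A \<gamma> z - G \<gamma> z) \<in> J_vert m p T s \<gamma>)"
      using Jvsub by blast
  qed
  have part2: "\<forall>A. (\<forall>\<tau>\<in>int_edges p T. poly_le m (A \<tau>)) \<and>
          (\<forall>\<gamma>\<in>int_verts p T. bd1 p T A \<gamma> \<in> J_vert m p T s \<gamma>) \<longrightarrow>
        (\<exists>C. (\<forall>\<sigma>\<in>T. poly_le m (C \<sigma>)) \<and>
             (\<forall>\<tau>\<in>int_edges p T. (\<lambda>z. bd2 T C \<tau> z - A \<tau> z) \<in> J_edge m p s \<tau>))"
  proof (intro allI impI, elim conjE)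
    fix A
    assume hA: "\<forall>\<tau>\<in>int_edges p T. poly_le m (A \<tau>)"
      and hbd: "\<forall>\<gamma>\<in>int_verts p T. bd1 p T A \<gamma> \<in> J_vert m p T s \<gamma>"
    have pb: "\<And>\<gamma>. poly_le m (bd1 p T A \<gamma>)" using poly_bd1 hA by blast
    have pnb: "poly_le m (\<lambda>z. - bd1 p T A \<gamma> z)" for \<gamma>
      using poly_le_scale[OF pb[of \<gamma>], of "-1"] by simp
    obtain a1 a2 a3 where pa: "poly_le m a1" "poly_le m a2" "poly_le m a3"
      and j1: "(\<lambda>z. - a1 z + a2 z - (- bd1 p T A \<gamma>1 z)) \<in> J_vert m p T r \<gamma>1"
      and j2: "(\<lambda>z. - a2 z + a3 z - (- bd1 p T A \<gamma>2 z)) \<in> J_vert m p T r \<gamma>2"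
      and j3: "(\<lambda>z. a1 z - a3 z - (- bd1 p T A \<gamma>3 z)) \<in> J_vert m p T r \<gamma>3"
      using coker[rule_format, of "\<lambda>z. - bd1 p T A \<gamma>1 z" "\<lambda>z. - bd1 p T A \<gamma>2 z" "\<lambda>z. - bd1 p T A \<gamma>3 z"] pnb by blast
    define D where "D = (\<lambda>\<tau> z. if \<tau> = \<tau>1 then - edge_sign \<tau>1 \<gamma>1 * a1 z
        else if \<tau> = \<tau>2 then edge_sign \<tau>2 \<gamma>1 * a2 z
        else if \<tau> = \<tau>3 then edge_sign \<tau>3 \<gamma>2 * a3 z else 0)"
    define A' where "A' = (\<lambda>\<tau> z. A \<tau> z + D \<tau> z)"
    have D0: "\<And>\<tau>. \<tau> \<notin> {\<tau>1, \<tau>2, \<tau>3} \<Longrightarrow> D \<tau> = (\<lambda>z. 0)" unfolding D_def by auto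
    have pD: "poly_le m (D \<tau>)" for \<tau>
      using poly_le_scale[OF pa(1), of "- edge_sign \<tau>1 \<gamma>1"] poly_le_scale[OF pa(2), of "edge_sign \<tau>2 \<gamma>1"]
        poly_le_scale[OF pa(3), of "edge_sign \<tau>3 \<gamma>2"] poly_le_zero[of m]
      unfolding D_def by (cases "\<tau> = \<tau>1"; cases "\<tau> = \<tau>2"; cases "\<tau> = \<tau>3") simp_all
    have pA': "\<forall>\<tau>\<in>int_edges p T. poly_le m (A' \<tau>)"
      unfolding A'_def using hA pD poly_le_add[of m "A _" "D _"] by blast
    have bdA': "\<And>\<gamma> z. bd1 p T A' \<gamma> z = bd1 p T A \<gamma> z + bd1 p T D \<gamma> z"
      unfolding bd1_def A'_def by (simp add: distrib_left sum.distrib)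
    have e1: "\<tau>1 \<in> edges_at p T \<gamma>1" "\<tau>2 \<in> edges_at p T \<gamma>1"
      "\<tau>2 \<in> edges_at p T \<gamma>2" "\<tau>3 \<in> edges_at p T \<gamma>2"
      "\<tau>3 \<in> edges_at p T \<gamma>3" "\<tau>1 \<in> edges_at p T \<gamma>3"
      unfolding edges_at_def using edges_int t1 t2 t3 by auto
    have sumtwo: "\<And>\<gamma> x y z. x \<in> edges_at p T \<gamma> \<Longrightarrow> y \<in> edges_at p T \<gamma> \<Longrightarrow> x \<noteq> y \<Longrightarrow>
        (\<forall>\<tau>\<in>edges_at p T \<gamma>. \<tau> \<noteq> x \<and> \<tau> \<noteq> y \<longrightarrow> D \<tau> = (\<lambda>z. 0)) \<Longrightarrow>
        bd1 p T D \<gamma> z = edge_sign x \<gamma> * D x z + edge_sign y \<gamma> * D y z"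
    proof -
      fix \<gamma> x y z
      assume xy: "x \<in> edges_at p T \<gamma>" "y \<in> edges_at p T \<gamma>" "x \<noteq> y"
        and z0: "\<forall>\<tau>\<in>edges_at p T \<gamma>. \<tau> \<noteq> x \<and> \<tau> \<noteq> y \<longrightarrow> D \<tau> = (\<lambda>z. 0)"
      have "bd1 p T D \<gamma> z = (\<Sum>\<tau>\<in>{x, y}. edge_sign \<tau> \<gamma> * D \<tau> z)"
        unfolding bd1_def
        by (rule sum.mono_neutral_right) (use fin_at xy z0 in auto)
      then show "bd1 p T D \<gamma> z = edge_sign x \<gamma> * D x z + edge_sign y \<gamma> * D y z"
        using xy by simp
    qed
    have o1: "edge_sign \<tau>1 \<gamma>3 * edge_sign \<tau>1 \<gamma>1 = -1"
      using edge_sign_opp[OF d13] unfolding t1 by (simp only: mult.commute)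
    have o2: "edge_sign \<tau>2 \<gamma>2 * edge_sign \<tau>2 \<gamma>1 = -1"
      using edge_sign_opp[OF d12] unfolding t2 by (simp only: mult.commute)
    have o3: "edge_sign \<tau>3 \<gamma>3 * edge_sign \<tau>3 \<gamma>2 = -1"
      using edge_sign_opp[OF d23] unfolding t3 by (simp only: mult.commute)
    have sq: "\<And>a b. edge_sign a b * (edge_sign a b * c) = c" for c
      by (simp add: mult.assoc[symmetric] edge_sign_sq)
    have dd: "\<tau>1 \<noteq> \<tau>2" "\<tau>2 \<noteq> \<tau>3" "\<tau>1 \<noteq> \<tau>3" by fact+
    have ne: "\<tau>3 \<notin> edges_at p T \<gamma>1" "\<tau>1 \<notin> edges_at p T \<gamma>2" "\<tau>2 \<notin> edges_at p T \<gamma>3"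
      using d12 d23 d13 by (simp_all add: edges_at_def t1 t2 t3)
    have z1: "\<forall>\<tau>\<in>edges_at p T \<gamma>1. \<tau> \<noteq> \<tau>1 \<and> \<tau> \<noteq> \<tau>2 \<longrightarrow> D \<tau> = (\<lambda>z. 0)"
    proof (intro ballI impI)
      fix \<tau> assume "\<tau> \<in> edges_at p T \<gamma>1" "\<tau> \<noteq> \<tau>1 \<and> \<tau> \<noteq> \<tau>2"
      then have "\<tau> \<notin> {\<tau>1, \<tau>2, \<tau>3}" using ne(1) by auto
      then show "D \<tau> = (\<lambda>z. 0)" by (rule D0)
    qed
    have z2: "\<forall>\<tau>\<in>edges_at p T \<gamma>2. \<tau> \<noteq> \<tau>2 \<and> \<tau> \<noteq> \<tau>3 \<longrightarrow> D \<tau> = (\<lambda>z. 0)"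
    proof (intro ballI impI)
      fix \<tau> assume "\<tau> \<in> edges_at p T \<gamma>2" "\<tau> \<noteq> \<tau>2 \<and> \<tau> \<noteq> \<tau>3"
      then have "\<tau> \<notin> {\<tau>1, \<tau>2, \<tau>3}" using ne(2) by auto
      then show "D \<tau> = (\<lambda>z. 0)" by (rule D0)
    qed
    have z3: "\<forall>\<tau>\<in>edges_at p T \<gamma>3. \<tau> \<noteq> \<tau>3 \<and> \<tau> \<noteq> \<tau>1 \<longrightarrow> D \<tau> = (\<lambda>z. 0)"
    proof (intro ballI impI)
      fix \<tau> assume "\<tau> \<in> edges_at p T \<gamma>3" "\<tau> \<noteq> \<tau>3 \<and> \<tau> \<noteq> \<tau>1"
      then have "\<tau> \<notin> {\<tau>1, \<tau>2, \<tau>3}" using ne(3) by auto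
      then show "D \<tau> = (\<lambda>z. 0)" by (rule D0)
    qed
    have bD1: "\<And>z. bd1 p T D \<gamma>1 z = - a1 z + a2 z"
    proof -
      fix z
      have "bd1 p T D \<gamma>1 z = edge_sign \<tau>1 \<gamma>1 * D \<tau>1 z + edge_sign \<tau>2 \<gamma>1 * D \<tau>2 z"
        by (rule sumtwo[OF e1(1) e1(2) dd(1) z1])
      also have "\<dots> = - a1 z + a2 z" unfolding D_def using dd by (simp add: sq)
      finally show "bd1 p T D \<gamma>1 z = - a1 z + a2 z" .
    qed
    have bD2: "\<And>z. bd1 p T D \<gamma>2 z = - a2 z + a3 z"
    proof -
      fix z
      have "bd1 p T D \<gamma>2 z = edge_sign \<tau>2 \<gamma>2 * D \<tau>2 z + edge_sign \<tau>3 \<gamma>2 * D \<tau>3 z"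
        by (rule sumtwo[OF e1(3) e1(4) dd(2) z2])
      also have "\<dots> = - a2 z + a3 z" unfolding D_def using dd sq o2
        by (simp add: mult.assoc[symmetric] edge_sign_sq)
      finally show "bd1 p T D \<gamma>2 z = - a2 z + a3 z" .
    qed
    have bD3: "\<And>z. bd1 p T D \<gamma>3 z = a1 z - a3 z"
    proof -
      fix z
      have "bd1 p T D \<gamma>3 z = edge_sign \<tau>3 \<gamma>3 * D \<tau>3 z + edge_sign \<tau>1 \<gamma>3 * D \<tau>1 z"
        by (rule sumtwo[OF e1(5) e1(6) dd(3)[symmetric] z3])
      also have "\<dots> = a1 z - a3 z" unfolding D_def using dd o1 o3
        by (simp add: mult.assoc[symmetric] edge_sign_sq)
      finally show "bd1 p T D \<gamma>3 z = a1 z - a3 z" .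
    qed
    have bDo: "\<And>\<gamma> z. \<gamma> \<notin> {\<gamma>1, \<gamma>2, \<gamma>3} \<Longrightarrow> bd1 p T D \<gamma> z = 0"
      unfolding bd1_def using notin D0 by (auto intro!: sum.neutral)
    have hbd': "\<forall>\<gamma>\<in>int_verts p T. bd1 p T A' \<gamma> \<in> J_vert m p T r \<gamma>"
    proof
      fix \<gamma> assume g: "\<gamma> \<in> int_verts p T"
      show "bd1 p T A' \<gamma> \<in> J_vert m p T r \<gamma>"
      proof (cases "\<gamma> \<in> {\<gamma>1, \<gamma>2, \<gamma>3}")
        case True
        then consider "\<gamma> = \<gamma>1" | "\<gamma> = \<gamma>2" | "\<gamma> = \<gamma>3" by blast
        then show ?thesis
        proof cases
          case 1
          have "bd1 p T A' \<gamma> = (\<lambda>z. - a1 z + a2 z - (- bd1 p T A \<gamma>1 z))"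
            using bdA' bD1 1 by (auto simp: fun_eq_iff)
          then show ?thesis using j1 1 by simp
        next
          case 2
          have "bd1 p T A' \<gamma> = (\<lambda>z. - a2 z + a3 z - (- bd1 p T A \<gamma>2 z))"
            using bdA' bD2 2 by (auto simp: fun_eq_iff)
          then show ?thesis using j2 2 by simp
        next
          case 3
          have "bd1 p T A' \<gamma> = (\<lambda>z. a1 z - a3 z - (- bd1 p T A \<gamma>3 z))"
            using bdA' bD3 3 by (auto simp: fun_eq_iff)
          then show ?thesis using j3 3 by simp
        qed
      next
        case False
        have "bd1 p T A' \<gamma> = bd1 p T A \<gamma>"
          using bdA' bDo False by (auto simp: fun_eq_iff)
        moreover have "J_vert m p T s \<gamma> = J_vert m p T r \<gamma>"
          by (rule J_vert_cong) (use notin False s_other in auto)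
        ultimately show ?thesis using hbd g by metis
      qed
    qed
    obtain C where pC: "\<forall>\<sigma>\<in>T. poly_le m (C \<sigma>)"
      and hC: "\<forall>\<tau>\<in>int_edges p T. (\<lambda>z. bd2 T C \<tau> z - A' \<tau> z) \<in> J_edge m p r \<tau>"
      using acyc2[rule_format, of A'] pA' hbd' by blast
    show "\<exists>C. (\<forall>\<sigma>\<in>T. poly_le m (C \<sigma>)) \<and>
             (\<forall>\<tau>\<in>int_edges p T. (\<lambda>z. bd2 T C \<tau> z - A \<tau> z) \<in> J_edge m p s \<tau>)"
    proof (rule exI[of _ C], rule conjI[OF pC], intro ballI)
      fix \<tau> assume t: "\<tau> \<in> int_edges p T"
      show "(\<lambda>z. bd2 T C \<tau> z - A \<tau> z) \<in> J_edge m p s \<tau>"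
      proof (cases "\<tau> \<in> {\<tau>1, \<tau>2, \<tau>3}")
        case True
        have "poly_le m (\<lambda>z. bd2 T C \<tau> z - A \<tau> z)"
          using poly_le_diff[OF poly_bd2[OF pC], of "A \<tau>"] hA t by blast
        then show ?thesis using Js_all[OF True] by simp
      next
        case False
        have "A' \<tau> = A \<tau>" unfolding A'_def using D0[OF False] by simp
        then have e: "(\<lambda>z. bd2 T C \<tau> z - A' \<tau> z) = (\<lambda>z. bd2 T C \<tau> z - A \<tau> z)" by simp
        have h: "(\<lambda>z. bd2 T C \<tau> z - A' \<tau> z) \<in> J_edge m p r \<tau>" using hC t by blast
        have "J_edge m p s \<tau> = J_edge m p r \<tau>" unfolding J_edge_def using s_other[OF False] by simp
        then show ?thesis using h e by simp
      qed
    qed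
  qed
  have "lower_acyclic m p T s"
    unfolding lower_acyclic_def using part1 part2 by (intro conjI)
  then show ?thesis unfolding s_def .
qed

end
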